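(* Let $\alpha\in(0,\pi/2]$ and define $$r(d)=\Big(16\sin^3\alpha\,d^2+30\big((3\cos\alpha-4)\sin\alpha+\alpha(4\cos\alpha-3)\big)\Big)^2,\qquad d\in\mathbb{R}.$$ Then $r$ has precisely one positive zero, which is a double zero, namely $$d_1=\frac{\sqrt{30}}{4}\sqrt{\frac{\alpha(3-4\cos\alpha)+(4-3\cos\alpha)\sin\alpha}{\sin^3\alpha}},$$ and it satisfies $d_1>\tfrac{5}{2}$.
   Context: The function $r$ arises as the resultant with respect to $u_1$ of the two polynomial equations in the system stated in this paper for the non-symmetric case of interpolating circular arc data by degree-7 Pythagorean-hodograph curves; only the explicit formula above is needed. *)

theory Defs
  imports Complex_Main "HOL-Computational_Algebra.Polynomial"
begin

definition r_poly :: "real \<Rightarrow> real poly" where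
  "r_poly a = ([: 30 * ((3 * cos a - 4) * sin a + a * (4 * cos a - 3)), 0, 16 * sin a ^ 3 :]) ^ 2"

end

theory Submission
  imports Defs
begin

lemma g_pos:
  fixes x :: real
  assumes "0 < x" "x \<le> pi / 2"
  shows "0 < 2 * x + 3 * sin x - 5 * sin x * cos x"
proof -
  let ?g = "\<lambda>t::real. 2 * t + 3 * sin t - 5 * sin t * cos t"
  have "?g 0 < ?g x"
  proof (rule DERIV_pos_imp_increasing_open[OF assms(1)])
    fix t :: real assume t: "0 < t" "t < x"
    have d: "DERIV ?g t :> 2 + 3 * cos t - 5 * (cos t * cos t - sin t * sin t)"
      by (auto intro!: derivative_eq_intros simp: algebra_simps)
    have c1: "cos t < 1" using t assms cos_monotone_0_pi[of 0 t] pi_gt_zero by simp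
    have c0: "cos t > 0" using t assms by (intro cos_gt_zero_pi) auto
    have "sin t * sin t = 1 - cos t * cos t" using sin_cos_squared_add[of t]
      by (simp add: power2_eq_square)
    then have "2 + 3 * cos t - 5 * (cos t * cos t - sin t * sin t) = (1 - cos t) * (7 + 10 * cos t)"
      by algebra
    also have "\<dots> > 0" using c1 c0 by simp
    finally show "\<exists>y. DERIV ?g t :> y \<and> y > 0" using d by blast
  next
    show "continuous_on {0..x} ?g" by (intro continuous_intros)
  qed
  then show ?thesis by simp
qed

lemma f_pos:
  fixes x :: real
  assumes "0 < x" "x \<le> pi / 2"
  shows "0 < 3 * x * (3 - 4 * cos x) + 3 * (4 - 3 * cos x) * sin x - 10 * sin x ^ 3"
proof -
  let ?f = "\<lambda>t::real. 3 * t * (3 - 4 * cos t) + 3 * (4 - 3 * cos t) * sin t - 10 * sin t ^ 3"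
  have "?f 0 < ?f x"
  proof (rule DERIV_pos_imp_increasing_open[OF assms(1)])
    fix t :: real assume t: "0 < t" "t < x"
    have d: "DERIV ?f t :> 3 * (3 - 4 * cos t) + 3 * t * (4 * sin t) + 3 * (3 * sin t) * sin t
        + 3 * (4 - 3 * cos t) * cos t - 10 * (3 * sin t ^ 2 * cos t)"
      by (auto intro!: derivative_eq_intros simp: algebra_simps power2_eq_square)
    have s: "sin t * sin t = 1 - cos t * cos t" using sin_cos_squared_add[of t]
      by (simp add: power2_eq_square)
    have "3 * (3 - 4 * cos t) + 3 * t * (4 * sin t) + 3 * (3 * sin t) * sin t
        + 3 * (4 - 3 * cos t) * cos t - 10 * (3 * sin t ^ 2 * cos t)
        = 6 * sin t * (2 * t + 3 * sin t - 5 * sin t * cos t)"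
      using s by algebra
    also have "\<dots> > 0" using g_pos[of t] t assms sin_gt_zero[of t] pi_gt_zero by simp
    finally show "\<exists>y. DERIV ?f t :> y \<and> y > 0" using d by blast
  next
    show "continuous_on {0..x} ?f" by (intro continuous_intros)
  qed
  then show ?thesis by simp
qed

theorem lemma1:
  fixes a :: real
  assumes "0 < a" and "a \<le> pi / 2"
  defines "d1 \<equiv> sqrt 30 / 4 *
      sqrt ((a * (3 - 4 * cos a) + (4 - 3 * cos a) * sin a) / sin a ^ 3)"
  shows "{d. 0 < d \<and> poly (r_poly a) d = 0} = {d1}
         \<and> order d1 (r_poly a) = 2
         \<and> d1 > 5 / 2"
proof -
  define N where "N = a * (3 - 4 * cos a) + (4 - 3 * cos a) * sin a"
  define S where "S = sin a"
  have S0: "S > 0" unfolding S_def using assms sin_gt_zero[of a] pi_gt_zero by simp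
  have key: "3 * N > 10 * S ^ 3" using f_pos[OF assms(1,2)] unfolding N_def S_def
    by (simp add: algebra_simps)
  have S3: "S ^ 3 > 0" using S0 by simp
  have Q: "N / S ^ 3 > 10 / 3" using key S3 by (simp add: field_simps)
  have d1def: "d1 = sqrt 30 / 4 * sqrt (N / S ^ 3)" unfolding d1_def N_def S_def by simp
  have Qp: "N / S ^ 3 \<ge> 0" using Q by linarith
  have d1sq: "d1 ^ 2 = 30 / 16 * (N / S ^ 3)" unfolding d1def power_mult_distrib
    using real_sqrt_pow2[OF Qp] by (simp add: power_divide)
  have "N / S ^ 3 > 0" using Q by linarith
  then have d1pos: "d1 > 0" unfolding d1def by (intro mult_pos_pos) auto
  have "30 / 16 * (N / S ^ 3) > 30 / 16 * (10 / 3)" using Q by linarith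
  then have "d1 ^ 2 > (5/2) ^ 2" using d1sq by (simp add: power2_eq_square)
  then have d1gt: "d1 > 5 / 2" using d1pos
    using power_less_imp_less_base[of "5/2" 2 d1] by simp
  define B where "B = 16 * S ^ 3"
  have B0: "B \<noteq> 0" using S3 unfolding B_def by simp
  have Bd: "B * d1 ^ 2 = 30 * N" using d1sq S3 unfolding B_def by (simp add: field_simps)
  have peq: "[: 30 * ((3 * cos a - 4) * sin a + a * (4 * cos a - 3)), 0, 16 * sin a ^ 3 :]
      = smult B ([:-d1, 1:] * [:d1, 1:])"
    using Bd unfolding B_def N_def S_def by (simp add: algebra_simps power2_eq_square)
  have r: "r_poly a = (smult B ([:-d1, 1:] * [:d1, 1:])) ^ 2"
    unfolding r_poly_def peq ..
  have roots: "poly (r_poly a) d = 0 \<longleftrightarrow> d = d1 \<or> d = - d1" for d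
  proof -
    have "poly (r_poly a) d = (B * ((d - d1) * (d + d1))) ^ 2" unfolding r
      by (simp add: algebra_simps)
    then show ?thesis using B0 by (auto simp: add_eq_0_iff)
  qed
  have set: "{d. 0 < d \<and> poly (r_poly a) d = 0} = {d1}"
    using roots d1pos by auto
  have o1: "order d1 [:-d1, 1:] = 1" using order_power_n_n[of d1 1] by simp
  have o2: "order d1 [:d1, 1:] = 0" using d1pos by (intro order_0I) simp
  have ne: "[:-d1, 1:] * [:d1, 1:] \<noteq> 0" by simp
  have "order d1 (smult B ([:-d1, 1:] * [:d1, 1:])) = 1"
    unfolding order_smult[OF B0] order_mult[OF ne] o1 o2 by simp
  moreover have "smult B ([:-d1, 1:] * [:d1, 1:]) \<noteq> 0" using B0 ne by simp
  ultimately have "order d1 (r_poly a) = 2"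
    unfolding r power2_eq_square by (subst order_mult) auto
  with set d1gt show ?thesis by blast
qed

end
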